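(* For $\ell=0,1,\ldots,N$ let $$\hat{\mathcal{K}}_\ell(p,q)=\prod_{m=1}^N\prod_{n=1}^{N-\ell}\frac{\Gamma\big(i(p_m-q_n)/\hbar\mu-g/2\hbar\big)}{\Gamma\big(i(p_m-q_n)/\hbar\mu+g/2\hbar\big)},\qquad p\in\mathbb{C}^N,\ q\in\mathbb{C}^{N-\ell}.$$ Then for every $k\in\{1,\ldots,N\}$ and $\tau\in\{+,-\}$, as identities of meromorphic functions, $$\hat A_{\tau k,\rm nr}(p_1,\ldots,p_N)\hat{\mathcal{K}}_\ell(p,q)=\sum_{j=0}^{\min(k,\ell)}\binom{\ell}{j}\hat A_{-\tau(k-j),\rm nr}(q_1,\ldots,q_{N-\ell})\hat{\mathcal{K}}_\ell(p,q),$$ where $\hat A_{\pm m,\rm nr}(q_1,\ldots,q_{N-\ell})\equiv0$ for $m>N-\ell$ and $\hat A_{0,\rm nr}\equiv1$.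
   Context: Fix $\hbar,\mu,g>0$; $\Gamma$ is Euler's gamma function. The operator $\exp(\mp i\hbar\mu\partial_{p_m})$ acts on meromorphic $f$ by $f(p)\mapsto f(p_1,\ldots,p_m\mp i\hbar\mu,\ldots)$. For $n$ variables and $k=1,\ldots,n$, $$\hat A_{\pm k,\rm nr}(p)=\sum_{I\subset\{1,\ldots,n\},|I|=k}\ \prod_{m\in I,m'\notin I}\frac{p_m-p_{m'}\mp i\mu g}{p_m-p_{m'}}\prod_{m\in I}\exp(\mp i\hbar\mu\partial_{p_m}).$$ *)

theory Defs
  imports "HOL-Analysis.Analysis"
begin

text \<open>Points of C^n are modelled as functions nat => complex, of which only the
 coordinates 1..n matter. The sign tau is a boolean: True means +, False means -.\<close>

definition sgnc :: "bool \<Rightarrow> complex" where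
  "sgnc tau = (if tau then 1 else -1)"

text \<open>Shift operator: product over m in I of exp(-+ i hbar mu d/dp_m).\<close>
definition shift_vec :: "real \<Rightarrow> real \<Rightarrow> bool \<Rightarrow> nat set \<Rightarrow> (nat \<Rightarrow> complex) \<Rightarrow> (nat \<Rightarrow> complex)" where
  "shift_vec hbar mu tau I p = (\<lambda>j. if j \<in> I then p j - sgnc tau * \<i> * of_real hbar * of_real mu else p j)"

text \<open>The operator A_{tau k, nr} in n variables applied to f, evaluated at p.
 For k = 0 it is the identity, for k > n it is zero (the paper's conventions).\<close>
definition A_nr :: "real \<Rightarrow> real \<Rightarrow> real \<Rightarrow> bool \<Rightarrow> nat \<Rightarrow> nat \<Rightarrow>
    ((nat \<Rightarrow> complex) \<Rightarrow> complex) \<Rightarrow> (nat \<Rightarrow> complex) \<Rightarrow> complex" where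
  "A_nr hbar mu g tau n k f p =
     (\<Sum>I\<in>{I. I \<subseteq> {1..n} \<and> card I = k}.
        (\<Prod>m\<in>I. \<Prod>m'\<in>{1..n} - I.
            (p m - p m' - sgnc tau * \<i> * of_real mu * of_real g) / (p m - p m'))
        * f (shift_vec hbar mu tau I p))"

definition K_kernel :: "real \<Rightarrow> real \<Rightarrow> real \<Rightarrow> nat \<Rightarrow> nat \<Rightarrow>
    (nat \<Rightarrow> complex) \<Rightarrow> (nat \<Rightarrow> complex) \<Rightarrow> complex" where
  "K_kernel hbar mu g N l p q =
     (\<Prod>m\<in>{1..N}. \<Prod>n\<in>{1..N-l}.
        Gamma (\<i> * (p m - q n) / (of_real hbar * of_real mu) - of_real g / (2 * of_real hbar))
      / Gamma (\<i> * (p m - q n) / (of_real hbar * of_real mu) + of_real g / (2 * of_real hbar)))"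

end

theory Submission
  imports Defs "HOL-Complex_Analysis.Complex_Analysis" "HOL-Computational_Algebra.Polynomial"
begin

definition hh :: "complex \<Rightarrow> complex \<Rightarrow> complex" where "hh \<beta> z = (z + \<beta>) / z"
definition cf :: "complex \<Rightarrow> (nat \<Rightarrow> complex) \<Rightarrow> nat set \<Rightarrow> nat set \<Rightarrow> complex" where
  "cf \<beta> u T J = (\<Prod>i\<in>J. \<Prod>j\<in>T - J. hh \<beta> (u i - u j))"
definition MM :: "complex \<Rightarrow> complex \<Rightarrow> (nat\<Rightarrow>complex) \<Rightarrow> (nat\<Rightarrow>complex) \<Rightarrow> (nat\<Rightarrow>complex) \<Rightarrow> nat set \<Rightarrow> complex" where
  "MM t \<beta> u g g' T = (\<Sum>J\<in>Pow T. t ^ card J * cf \<beta> u T J * (\<Prod>j\<in>J. g j) * (\<Prod>j\<in>T - J. g' j))"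

lemma MM_empty[simp]: "MM t \<beta> u g g' {} = 1"
  by (simp add: MM_def cf_def)

lemma MM_insert:
  assumes "finite T" "v \<notin> T"
  shows "MM t \<beta> u g g' (insert v T) = g' v * MM t \<beta> u (\<lambda>j. g j * hh \<beta> (u j - u v)) g' T
           + t * g v * MM t \<beta> u g (\<lambda>j. g' j * hh \<beta> (u v - u j)) T"
proof -
  have disj: "Pow T \<inter> insert v ` Pow T = {}" using assms by auto
  have inj: "inj_on (insert v) (Pow T)" unfolding inj_on_def by (metis Pow_iff assms(2) insert_ident subsetD)
  have fin: "finite (Pow T)" using assms by simp
  have "MM t \<beta> u g g' (insert v T) =
     (\<Sum>J\<in>Pow T. t ^ card J * cf \<beta> u (insert v T) J * (\<Prod>j\<in>J. g j) * (\<Prod>j\<in>insert v T - J. g' j))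
   + (\<Sum>J\<in>Pow T. t ^ card (insert v J) * cf \<beta> u (insert v T) (insert v J) * (\<Prod>j\<in>insert v J. g j) * (\<Prod>j\<in>insert v T - insert v J. g' j))"
    unfolding MM_def Pow_insert using disj fin inj
    by (simp add: sum.union_disjoint sum.reindex)
  also have "(\<Sum>J\<in>Pow T. t ^ card J * cf \<beta> u (insert v T) J * (\<Prod>j\<in>J. g j) * (\<Prod>j\<in>insert v T - J. g' j))
      = g' v * MM t \<beta> u (\<lambda>j. g j * hh \<beta> (u j - u v)) g' T"
    unfolding MM_def sum_distrib_left
  proof (rule sum.cong[OF refl])
    fix J assume J: "J \<in> Pow T"
    have e: "insert v T - J = insert v (T - J)" using J assms by auto
    have fJ: "finite J" "finite (T - J)" using J assms finite_subset by auto
    have vJ: "v \<notin> T - J" using assms by auto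
    have "cf \<beta> u (insert v T) J = cf \<beta> u T J * (\<Prod>i\<in>J. hh \<beta> (u i - u v))"
      unfolding cf_def e using fJ vJ by (simp add: prod.distrib mult.commute)
    then show "t ^ card J * cf \<beta> u (insert v T) J * prod g J * prod g' (insert v T - J) =
         g' v * (t ^ card J * cf \<beta> u T J * (\<Prod>j\<in>J. g j * hh \<beta> (u j - u v)) * prod g' (T - J))"
      unfolding e using fJ vJ by (simp add: prod.distrib algebra_simps)
  qed
  also have "(\<Sum>J\<in>Pow T. t ^ card (insert v J) * cf \<beta> u (insert v T) (insert v J) * (\<Prod>j\<in>insert v J. g j) * (\<Prod>j\<in>insert v T - insert v J. g' j))
      = t * g v * MM t \<beta> u g (\<lambda>j. g' j * hh \<beta> (u v - u j)) T"
    unfolding MM_def sum_distrib_left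
  proof (rule sum.cong[OF refl])
    fix J assume J: "J \<in> Pow T"
    have e: "insert v T - insert v J = T - J" using J assms by auto
    have fJ: "finite J" "finite (T - J)" using J assms finite_subset by auto
    have vJ: "v \<notin> J" using assms J by auto
    have "cf \<beta> u (insert v T) (insert v J) = (\<Prod>j\<in>T - J. hh \<beta> (u v - u j)) * cf \<beta> u T J"
      unfolding cf_def e using fJ vJ by simp
    then show "t ^ card (insert v J) * cf \<beta> u (insert v T) (insert v J) * prod g (insert v J) * prod g' (insert v T - insert v J) =
         t * g v * (t ^ card J * cf \<beta> u T J * prod g J * (\<Prod>j\<in>T - J. g' j * hh \<beta> (u v - u j)))"
      unfolding e using fJ vJ by (simp add: prod.distrib algebra_simps)
  qed
  finally show ?thesis .
qed

lemma MM_cong: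
  assumes "\<And>j. j \<in> T \<Longrightarrow> u j = u' j" "\<And>j. j \<in> T \<Longrightarrow> g j = g2 j" "\<And>j. j \<in> T \<Longrightarrow> g' j = g2' j"
  shows "MM t \<beta> u g g' T = MM t \<beta> u' g2 g2' T"
  unfolding MM_def cf_def
  by (intro sum.cong refl arg_cong2[where f="(*)"] prod.cong) (use assms in auto)

lemma MM_scale:
  assumes "finite T"
  shows "MM t \<beta> u (\<lambda>i. g i * q i) (\<lambda>i. g' i * q i) T = (\<Prod>i\<in>T. q i) * MM t \<beta> u g g' T"
  unfolding MM_def sum_distrib_left
proof (rule sum.cong[OF refl])
  fix J assume J: "J \<in> Pow T"
  have "(\<Prod>i\<in>T. q i) = (\<Prod>i\<in>J. q i) * (\<Prod>i\<in>T - J. q i)"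
    using J assms prod.subset_diff[of J T q] by (simp add: mult.commute)
  then show "t ^ card J * cf \<beta> u T J * (\<Prod>j\<in>J. g j * q j) * (\<Prod>j\<in>T - J. g' j * q j) =
       prod q T * (t ^ card J * cf \<beta> u T J * prod g J * prod g' (T - J))"
    by (simp add: prod.distrib algebra_simps)
qed

lemma MM_tendsto:
  assumes "finite T" "\<And>j. j \<in> T \<Longrightarrow> ((\<lambda>w. G w j) \<longlongrightarrow> g j) F"
    "\<And>j. j \<in> T \<Longrightarrow> ((\<lambda>w. G' w j) \<longlongrightarrow> g' j) F"
  shows "((\<lambda>w. MM t \<beta> u (G w) (G' w) T) \<longlongrightarrow> MM t \<beta> u g g' T) F"
  unfolding MM_def
  using assms by (intro tendsto_sum tendsto_mult tendsto_const tendsto_prod) auto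

lemma ev_at_notin:
  assumes "finite A" "q \<notin> A"
  shows "eventually (\<lambda>w. w \<notin> A) (at (q::complex))"
proof -
  have "open (- A)" using assms by (simp add: open_Compl finite_imp_closed)
  then show ?thesis unfolding eventually_at_topological using assms by blast
qed

lemma ev_inf_notin:
  assumes "finite (A::complex set)"
  shows "eventually (\<lambda>w. w \<notin> A) at_infinity"
proof -
  have "bounded A" using assms by (simp add: finite_imp_bounded)
  then obtain b where b: "\<And>x. x \<in> A \<Longrightarrow> norm x \<le> b" unfolding bounded_iff by blast
  have "\<forall>x::complex. b + 1 \<le> norm x \<longrightarrow> x \<notin> A"
  proof (intro allI impI)
    fix x :: complex assume "b + 1 \<le> norm x" then show "x \<notin> A" using b[of x] by linarith
  qed
  then show ?thesis unfolding eventually_at_infinity by blast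
qed

lemma KL:
  fixes f :: "complex \<Rightarrow> complex"
  assumes "finite P" "f holomorphic_on (- P)" "\<And>p. p \<in> P \<Longrightarrow> ((\<lambda>w. (w - p) * f w) \<longlongrightarrow> 0) (at p)"
    "(f \<longlongrightarrow> 0) at_infinity" "z \<notin> P"
  shows "f z = 0"
  using assms
proof (induction P arbitrary: f rule: finite_induct)
  case empty then show ?case using Liouville_weak_0[of f] by simp
next
  case (insert p P f)
  have opn: "open (- P)" using insert(1) by (simp add: open_Compl finite_imp_closed)
  have pint: "p \<in> interior (- P)" using insert(2) opn by (simp add: interior_open)
  have e: "- insert p P = - P - {p}" by blast
  have hol: "f holomorphic_on (- P - {p})" using insert(4) unfolding e .
  have "((\<lambda>w. (w - p) * f w) \<longlongrightarrow> 0) (at p)" using insert(5) by simp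
  then obtain g where g: "g holomorphic_on - P" "\<And>z. z \<in> - P - {p} \<Longrightarrow> g z = f z"
    using holomorphic_on_extend_lim[OF hol pint] by blast
  have fin: "finite (insert p P)" using insert(1) by simp
  have "g z = 0"
  proof (rule insert.IH[OF g(1)])
    fix q assume q: "q \<in> P"
    have "eventually (\<lambda>w. w \<notin> insert p P - {q}) (at q)"
      using ev_at_notin[of "insert p P - {q}" q] fin by simp
    moreover have "eventually (\<lambda>w. w \<noteq> q) (at q)" by (simp add: eventually_at_filter)
    ultimately have "eventually (\<lambda>w. (w - q) * f w = (w - q) * g w) (at q)"
    proof eventually_elim
      case (elim w) then show ?case using g(2)[of w] by auto
    qed
    then show "((\<lambda>w. (w - q) * g w) \<longlongrightarrow> 0) (at q)"
      using insert(5)[of q] q by (auto intro: Lim_transform_eventually)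
  next
    have "eventually (\<lambda>w. w \<notin> insert p P) at_infinity" using ev_inf_notin[OF fin] .
    then have "eventually (\<lambda>w. f w = g w) at_infinity"
    proof eventually_elim
      case (elim w) then show ?case using g(2)[of w] by auto
    qed
    then show "(g \<longlongrightarrow> 0) at_infinity" using Lim_transform_eventually[OF insert(6)] by blast
  next
    show "z \<notin> P" using insert(7) by simp
  qed
  then show ?case using g(2)[of z] insert(7) by simp
qed


lemma ratio_inf: "((\<lambda>w::complex. (w + B) / (w + C)) \<longlongrightarrow> 1) at_infinity"
proof -
  have fl: "filterlim (\<lambda>w::complex. w + C) at_infinity at_infinity"
    using tendsto_add_filterlim_at_infinity[OF tendsto_const filterlim_ident, of C] by (simp add: add.commute)
  have z: "((\<lambda>w. (B - C) / (w + C)) \<longlongrightarrow> 0) at_infinity"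
    by (rule tendsto_divide_0[OF tendsto_const fl])
  have "((\<lambda>w. 1 + (B - C) / (w + C)) \<longlongrightarrow> 1 + 0) at_infinity"
    by (rule tendsto_add[OF tendsto_const z])
  then have l: "((\<lambda>w. 1 + (B - C) / (w + C)) \<longlongrightarrow> 1) at_infinity" by simp
  have "eventually (\<lambda>w. w \<notin> {-C}) at_infinity" by (rule ev_inf_notin) simp
  then have "eventually (\<lambda>w. 1 + (B - C) / (w + C) = (w + B) / (w + C)) at_infinity"
  proof eventually_elim
    case (elim w) then have "w + C \<noteq> 0" using add_eq_0_iff2 by fastforce
    have "(w + B) / (w + C) = ((w + C) + (B - C)) / (w + C)" by simp
    also have "\<dots> = 1 + (B - C) / (w + C)" using \<open>w + C \<noteq> 0\<close> by (subst add_divide_distrib) simp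
    finally show ?case by simp
  qed
  then show ?thesis by (rule Lim_transform_eventually[OF l])
qed

definition rr :: "complex \<Rightarrow> complex \<Rightarrow> complex \<Rightarrow> complex" where
  "rr a z w = (z - w - a) / (z - w + a)"

lemma rr_tend: "z - p + a \<noteq> 0 \<Longrightarrow> ((\<lambda>w. rr a z w) \<longlongrightarrow> rr a z p) (at p)"
  unfolding rr_def by (intro tendsto_divide tendsto_diff tendsto_add tendsto_const tendsto_ident_at) auto
lemma rr_tend2: "p - z + a \<noteq> 0 \<Longrightarrow> ((\<lambda>w. rr a w z) \<longlongrightarrow> rr a p z) (at p)"
  unfolding rr_def by (intro tendsto_divide tendsto_diff tendsto_add tendsto_const tendsto_ident_at) auto
lemma hh_tend1: "z - p \<noteq> 0 \<Longrightarrow> ((\<lambda>w. hh \<beta> (z - w)) \<longlongrightarrow> hh \<beta> (z - p)) (at p)"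
  unfolding hh_def by (intro tendsto_divide tendsto_diff tendsto_add tendsto_const tendsto_ident_at) auto
lemma hh_tend2: "p - z \<noteq> 0 \<Longrightarrow> ((\<lambda>w. hh \<beta> (w - z)) \<longlongrightarrow> hh \<beta> (p - z)) (at p)"
  unfolding hh_def by (intro tendsto_divide tendsto_diff tendsto_add tendsto_const tendsto_ident_at) auto

lemma rr_holo: "(\<And>w. w \<in> A \<Longrightarrow> z - w + a \<noteq> 0) \<Longrightarrow> (\<lambda>w. rr a z w) holomorphic_on A"
  unfolding rr_def by (intro holomorphic_intros) auto
lemma rr_holo2: "(\<And>w. w \<in> A \<Longrightarrow> w - z + a \<noteq> 0) \<Longrightarrow> (\<lambda>w. rr a w z) holomorphic_on A"
  unfolding rr_def by (intro holomorphic_intros) auto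
lemma hh_holo1: "(\<And>w. w \<in> A \<Longrightarrow> z - w \<noteq> 0) \<Longrightarrow> (\<lambda>w. hh \<beta> (z - w)) holomorphic_on A"
  unfolding hh_def by (intro holomorphic_intros) auto
lemma hh_holo2: "(\<And>w. w \<in> A \<Longrightarrow> w - z \<noteq> 0) \<Longrightarrow> (\<lambda>w. hh \<beta> (w - z)) holomorphic_on A"
  unfolding hh_def by (intro holomorphic_intros) auto

lemma rr_inf: "((\<lambda>w. rr a z w) \<longlongrightarrow> 1) at_infinity"
proof -
  have "rr a z w = (- (z - w - a)) / (- (z - w + a))" for w
    unfolding rr_def by (simp only: minus_divide_divide)
  also have "(- (z - w - a)) / (- (z - w + a)) = (w + (a - z)) / (w + (- a - z))" for w
    by (simp add: algebra_simps)
  finally show ?thesis using ratio_inf[of "a - z" "- a - z"] by simp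
qed
lemma rr_inf2: "((\<lambda>w. rr a w z) \<longlongrightarrow> 1) at_infinity"
proof -
  have "rr a w z = (w + (- z - a)) / (w + (a - z))" for w
    unfolding rr_def by (simp add: algebra_simps)
  then show ?thesis using ratio_inf[of "- z - a" "a - z"] by simp
qed
lemma hh_inf1: "((\<lambda>w. hh \<beta> (z - w)) \<longlongrightarrow> 1) at_infinity"
proof -
  have "hh \<beta> (z - w) = (- (z - w + \<beta>)) / (- (z - w))" for w
    unfolding hh_def by (simp only: minus_divide_divide)
  also have "(- (z - w + \<beta>)) / (- (z - w)) = (w + (- z - \<beta>)) / (w + (- z))" for w
    by (simp add: algebra_simps)
  finally show ?thesis using ratio_inf[of "- z - \<beta>" "- z"] by simp
qed
lemma hh_inf2: "((\<lambda>w. hh \<beta> (w - z)) \<longlongrightarrow> 1) at_infinity"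
proof -
  have "hh \<beta> (w - z) = (w + (\<beta> - z)) / (w + (- z))" for w
    unfolding hh_def by (simp add: algebra_simps)
  then show ?thesis using ratio_inf[of "\<beta> - z" "- z"] by simp
qed

lemma MM_holo:
  assumes "finite T" "\<And>j. j \<in> T \<Longrightarrow> (\<lambda>w. G w j) holomorphic_on A"
    "\<And>j. j \<in> T \<Longrightarrow> (\<lambda>w. G' w j) holomorphic_on A"
  shows "(\<lambda>w. MM t \<beta> u (G w) (G' w) T) holomorphic_on A"
  unfolding MM_def
  using assms by (intro holomorphic_on_sum holomorphic_on_mult holomorphic_on_const holomorphic_on_prod) auto

definition LH :: "complex \<Rightarrow> complex \<Rightarrow> (nat \<Rightarrow> complex) \<Rightarrow> nat set \<Rightarrow> (nat \<Rightarrow> complex) \<Rightarrow> nat set \<Rightarrow> complex" where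
  "LH t a x S y T = MM t (2*a) x (\<lambda>i. \<Prod>n\<in>T. rr a (x i) (y n)) (\<lambda>_. 1) S"

definition MTP where
  "MTP t a x S y T \<longleftrightarrow> (1+t)^card T * LH t a x S y T = (1+t)^card S * LH t (-a) y T x S"

definition generic :: "complex \<Rightarrow> (nat \<Rightarrow> complex) \<Rightarrow> nat set \<Rightarrow> (nat \<Rightarrow> complex) \<Rightarrow> nat set \<Rightarrow> bool" where
  "generic a x S y T \<longleftrightarrow> finite S \<and> finite T \<and> inj_on x S \<and> inj_on y T \<and>
     (\<forall>m\<in>S. \<forall>n\<in>T. x m - y n + a \<noteq> 0 \<and> x m - y n - a \<noteq> 0)"

lemma MTP_swap: "MTP t (-a) y T x S \<Longrightarrow> MTP t a x S y T"
  unfolding MTP_def by simp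

lemma generic_swap: "generic a x S y T \<Longrightarrow> generic (-a) y T x S"
proof -
  have e1: "((y u - x w + - a = 0) = (x w - y u + a = 0))" for u w by algebra
  have e2: "((y u - x w - - a = 0) = (x w - y u - a = 0))" for u w by algebra
  show "generic a x S y T \<Longrightarrow> generic (-a) y T x S" unfolding generic_def e1 e2 by auto
qed

lemma generic_mono: "generic a x S y T \<Longrightarrow> S' \<subseteq> S \<Longrightarrow> T' \<subseteq> T \<Longrightarrow> generic a x S' y T'"
  unfolding generic_def by (auto intro: finite_subset inj_on_subset)

lemma frac_eq_neg: "A = - A' \<Longrightarrow> B = - B' \<Longrightarrow> (A::complex) / B = A' / B'"
  by (simp add: minus_divide_divide)
lemma frac_eq: "A = A' \<Longrightarrow> B = B' \<Longrightarrow> (A::complex) / B = A' / B'"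
  by simp

lemma res_key: "D \<noteq> 0 \<Longrightarrow> (- D) * ((A::complex) / D) = - A"
  by simp
lemma res_key2: "D \<noteq> 0 \<Longrightarrow> D * ((A::complex) / D) = A"
  by simp

lemma step:
  assumes gen: "generic a x S y T" and v: "v \<in> T"
    and IH: "\<And>S' T'. S' \<subseteq> S \<Longrightarrow> T' \<subseteq> T - {v} \<Longrightarrow> MTP t a x S' y T'"
  shows "MTP t a x S y T"
proof -
  define T0 where "T0 = T - {v}"
  define \<beta> where "\<beta> = - (2*a)"
  define Gy where "Gy j = (\<Prod>m\<in>S. rr (-a) (y j) (x m))" for j
  define Gw where "Gw w = (\<Prod>m\<in>S. rr (-a) w (x m))" for w
  define gx0 where "gx0 i = (\<Prod>n\<in>T0. rr a (x i) (y n))" for i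
  define L where "L w = MM t (2*a) x (\<lambda>i. gx0 i * rr a (x i) w) (\<lambda>_. 1) S" for w
  define R1 where "R1 w = MM t \<beta> y (\<lambda>j. Gy j * hh \<beta> (y j - w)) (\<lambda>_. 1) T0" for w
  define R2 where "R2 w = MM t \<beta> y Gy (\<lambda>j. hh \<beta> (w - y j)) T0" for w
  define f where "f w = (1+t)^card T * L w - (1+t)^card S * (R1 w + t * Gw w * R2 w)" for w
  define P where "P = (\<lambda>m. x m + a) ` S \<union> y ` T0"
  have finS: "finite S" and finT: "finite T" and injx: "inj_on x S" and injy: "inj_on y T"
    and gxy: "\<And>m n. m \<in> S \<Longrightarrow> n \<in> T \<Longrightarrow> x m - y n + a \<noteq> 0 \<and> x m - y n - a \<noteq> 0"
    using gen unfolding generic_def by auto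
  have finT0: "finite T0" using finT T0_def by simp
  have Tins: "T = insert v T0" "v \<notin> T0" using v T0_def by auto
  have cardT: "card T = Suc (card T0)" using Tins finT0 by simp
  have finP: "finite P" unfolding P_def using finS finT0 by simp
  have LHx: "LH t a x S y T = L (y v)"
    unfolding LH_def L_def
  proof (rule MM_cong)
    fix i show "(\<Prod>n\<in>T. rr a (x i) (y n)) = gx0 i * rr a (x i) (y v)"
      unfolding gx0_def Tins(1) using Tins(2) finT0 by (simp add: mult.commute)
  qed auto
  have LHy: "LH t (-a) y T x S = R1 (y v) + t * Gw (y v) * R2 (y v)"
    unfolding LH_def Tins(1) MM_insert[OF finT0 Tins(2)]
    by (simp add: R1_def R2_def Gy_def[abs_def] Gw_def \<beta>_def)
  have fz: "f (y v) = 0"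
  proof (rule KL[where f=f and z="y v", OF finP])
    show "y v \<notin> P"
    proof
      assume "y v \<in> P"
      then consider m where "m \<in> S" "y v = x m + a" | n where "n \<in> T0" "y v = y n" unfolding P_def by auto
      then show False
      proof cases
        case 1 then show False using gxy[of m v] v by simp
      next
        case 2 then show False using injy v Tins unfolding inj_on_def T0_def by blast
      qed
    qed
    have npS: "\<And>w i. w \<notin> P \<Longrightarrow> i \<in> S \<Longrightarrow> w \<noteq> x i + a" unfolding P_def by auto
    have npS1: "x i - w + a \<noteq> 0" if "w \<notin> P" "i \<in> S" for w i
    proof
      assume h: "x i - w + a = 0"
      have "w = (x i + a) - (x i - w + a)" by simp
      with h npS[OF that] show False by simp
    qed
    have npS2: "w - x i + - a \<noteq> 0" if "w \<notin> P" "i \<in> S" for w i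
    proof
      assume h: "w - x i + - a = 0"
      have "w = (x i + a) + (w - x i + - a)" by simp
      with h npS[OF that] show False by simp
    qed
    have npT: "\<And>w j. w \<notin> P \<Longrightarrow> j \<in> T0 \<Longrightarrow> w \<noteq> y j" unfolding P_def by auto
    have npT': "\<And>j. j \<in> T0 \<Longrightarrow> y j \<in> P" unfolding P_def by auto
    have hL: "L holomorphic_on - P" unfolding L_def[abs_def]
      by (rule MM_holo[OF finS, where G="\<lambda>w i. gx0 i * rr a (x i) w" and G'="\<lambda>w i. 1"])
         (use npS1 in \<open>auto intro!: holomorphic_intros rr_holo\<close>)
    have hR1: "R1 holomorphic_on - P" unfolding R1_def[abs_def]
      by (rule MM_holo[OF finT0, where G="\<lambda>w j. Gy j * hh \<beta> (y j - w)" and G'="\<lambda>w i. 1"])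
         (use npT npT' in \<open>auto intro!: holomorphic_intros hh_holo1\<close>)
    have hR2: "R2 holomorphic_on - P" unfolding R2_def[abs_def]
      by (rule MM_holo[OF finT0, where G="\<lambda>w j. Gy j" and G'="\<lambda>w j. hh \<beta> (w - y j)"])
         (use npT npT' in \<open>auto intro!: holomorphic_intros hh_holo2\<close>)
    have hGw: "Gw holomorphic_on - P" unfolding Gw_def[abs_def]
      by (rule holomorphic_on_prod) (use npS2 in \<open>auto intro!: rr_holo2\<close>)
    show "f holomorphic_on - P" unfolding f_def[abs_def]
      using hL hR1 hR2 hGw by (intro holomorphic_intros)
    have tL: "((\<lambda>w. gx0 j * rr a (x j) w) \<longlongrightarrow> gx0 j * 1) at_infinity" for j
      by (intro tendsto_mult tendsto_const rr_inf)
    have tR1: "((\<lambda>w. Gy j * hh \<beta> (y j - w)) \<longlongrightarrow> Gy j * 1) at_infinity" for j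
      by (intro tendsto_mult tendsto_const hh_inf1)
    have iL: "(L \<longlongrightarrow> MM t (2*a) x (\<lambda>i. gx0 i * 1) (\<lambda>_. 1) S) at_infinity" unfolding L_def[abs_def]
      by (rule MM_tendsto[OF finS, where G="\<lambda>w i. gx0 i * rr a (x i) w" and G'="\<lambda>w i. 1"])
         (use tL in auto)
    have iR1: "(R1 \<longlongrightarrow> MM t \<beta> y (\<lambda>j. Gy j * 1) (\<lambda>_. 1) T0) at_infinity" unfolding R1_def[abs_def]
      by (rule MM_tendsto[OF finT0, where G="\<lambda>w j. Gy j * hh \<beta> (y j - w)" and G'="\<lambda>w i. 1"])
         (use tR1 in auto)
    have iR2: "(R2 \<longlongrightarrow> MM t \<beta> y Gy (\<lambda>_. 1) T0) at_infinity" unfolding R2_def[abs_def]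
      by (rule MM_tendsto[OF finT0, where G="\<lambda>w j. Gy j" and G'="\<lambda>w j. hh \<beta> (w - y j)"])
         (auto intro!: tendsto_const hh_inf2)
    have iGw: "(Gw \<longlongrightarrow> (\<Prod>m\<in>S. 1)) at_infinity" unfolding Gw_def[abs_def]
      by (rule tendsto_prod) (rule rr_inf2)
    have lim: "(f \<longlongrightarrow> (1+t)^card T * MM t (2*a) x (\<lambda>i. gx0 i * 1) (\<lambda>_. 1) S
          - (1+t)^card S * (MM t \<beta> y (\<lambda>j. Gy j * 1) (\<lambda>_. 1) T0 + t * (\<Prod>m\<in>S. 1) * MM t \<beta> y Gy (\<lambda>_. 1) T0)) at_infinity"
      unfolding f_def[abs_def] using iL iR1 iR2 iGw by (intro tendsto_diff tendsto_mult tendsto_add tendsto_const)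
    have ih: "MTP t a x S y T0" using IH[of S T0] T0_def by simp
    have "(1+t)^card T * MM t (2*a) x (\<lambda>i. gx0 i * 1) (\<lambda>_. 1) S
          - (1+t)^card S * (MM t \<beta> y (\<lambda>j. Gy j * 1) (\<lambda>_. 1) T0 + t * (\<Prod>m\<in>S. 1) * MM t \<beta> y Gy (\<lambda>_. 1) T0)
        = (1+t) * ((1+t)^card T0 * LH t a x S y T0 - (1+t)^card S * LH t (-a) y T0 x S)"
      unfolding LH_def cardT gx0_def[abs_def] Gy_def[abs_def] \<beta>_def by (simp add: algebra_simps)
    also have "\<dots> = 0" using ih unfolding MTP_def by simp
    finally show "(f \<longlongrightarrow> 0) at_infinity" using lim by simp
    show "\<And>p. p \<in> P \<Longrightarrow> ((\<lambda>w. (w - p) * f w) \<longlongrightarrow> 0) (at p)"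
    proof -
      fix p assume "p \<in> P"
      then consider m where "m \<in> S" "p = x m + a" | n where "n \<in> T0" "p = y n" unfolding P_def by auto
      then show "((\<lambda>w. (w - p) * f w) \<longlongrightarrow> 0) (at p)"
      proof cases
        case 1
        note m = 1
        define S0 where "S0 = S - {m}"
        have Sins: "S = insert m S0" "m \<notin> S0" using m S0_def by auto
        have finS0: "finite S0" using finS S0_def by simp
        have cardS: "card S = Suc (card S0)" using Sins finS0 by simp
        define q where "q i = hh (2*a) (x m - x i)" for i
        define L1 where "L1 w = MM t (2*a) x (\<lambda>i. gx0 i * rr a (x i) w * hh (2*a) (x i - x m)) (\<lambda>_. 1) S0" for w
        define L2 where "L2 w = MM t (2*a) x (\<lambda>i. gx0 i * rr a (x i) w) (\<lambda>i. hh (2*a) (x m - x i)) S0" for w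
        define Gw0 where "Gw0 w = (\<Prod>i\<in>S0. rr (-a) w (x i))" for w
        define E where "E w = (1+t)^card T * ((w-p)*L1 w + t*gx0 m*(w - x m + a)*L2 w)
            - (1+t)^card S * ((w-p)*R1 w + t*((w - x m + a)*Gw0 w)*R2 w)" for w
        have Lsplit: "L w = L1 w + t * (gx0 m * rr a (x m) w) * L2 w" for w
          unfolding L_def L1_def L2_def Sins(1) MM_insert[OF finS0 Sins(2)] by simp
        have Gwsplit: "Gw w = rr (-a) w (x m) * Gw0 w" for w
          unfolding Gw_def Gw0_def Sins(1) using finS0 Sins(2) by simp
        have ev: "eventually (\<lambda>w. (w - p) * f w = E w) (at p)"
        proof -
          have "eventually (\<lambda>w. w \<noteq> p) (at p)" by (simp add: eventually_at_filter)
          then show ?thesis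
          proof eventually_elim
            case (elim w)
            have d1: "x m - w + a \<noteq> 0" using elim m(2) by (auto simp: algebra_simps)
            have d2: "w - x m + - a \<noteq> 0" using elim m(2) by (auto simp: algebra_simps)
            have k1: "(w - p) * rr a (x m) w = w - x m + a"
            proof -
              have e: "(w - p) = - (x m - w + a)" using m(2) by simp
              have "(w - p) * rr a (x m) w = - (x m - w - a)"
                unfolding rr_def e by (rule res_key[OF d1])
              then show ?thesis by simp
            qed
            have k2: "(w - p) * rr (-a) w (x m) = w - x m + a"
            proof -
              have e: "(w - p) = (w - x m + - a)" using m(2) by simp
              have "(w - p) * rr (-a) w (x m) = (w - x m - - a)"
                unfolding rr_def e by (rule res_key2[OF d2])
              then show ?thesis by simp
            qed
            have "(w - p) * f w = (1+t)^card T * ((w-p)*L1 w + t*gx0 m*((w - p) * rr a (x m) w)*L2 w)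
                - (1+t)^card S * ((w-p)*R1 w + t*(((w - p) * rr (-a) w (x m))*Gw0 w)*R2 w)"
              unfolding f_def Lsplit Gwsplit by (simp add: algebra_simps)
            also have "\<dots> = E w" unfolding k1 k2 E_def by simp
            finally show ?case .
          qed
        qed
        have xne: "x i - x m \<noteq> 0" if "i \<in> S0" for i
          using injx that Sins unfolding inj_on_def by auto
        have xne': "x i \<noteq> x m" if "i \<in> S0" for i using xne[OF that] by simp
        have yne: "y j - p \<noteq> 0" if "j \<in> T0" for j
          using gxy[of m j] m that T0_def by (auto simp: algebra_simps)
        have ynp: "p - y j \<noteq> 0" if "j \<in> T0" for j
          using yne[OF that] by (metis right_minus_eq)
        have gnz: "p - x i + - a \<noteq> 0" if "i \<in> S0" for i
        proof -
          have e: "p - x i + - a = - (x i - x m)" using m(2) by simp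
          show ?thesis using e xne[OF that] by (metis neg_equal_0_iff_equal)
        qed
        have tL1: "(L1 \<longlongrightarrow> L1 p) (at p)" unfolding L1_def[abs_def]
          by (rule MM_tendsto[OF finS0, where G="\<lambda>w i. gx0 i * rr a (x i) w * hh (2*a) (x i - x m)" and G'="\<lambda>w i. 1"])
             (auto intro!: tendsto_mult tendsto_const rr_tend simp: m(2) xne xne')
        have tL2: "(L2 \<longlongrightarrow> L2 p) (at p)" unfolding L2_def[abs_def]
          by (rule MM_tendsto[OF finS0, where G="\<lambda>w i. gx0 i * rr a (x i) w" and G'="\<lambda>w i. hh (2*a) (x m - x i)"])
             (auto intro!: tendsto_mult tendsto_const rr_tend simp: m(2) xne xne')
        have tR1: "(R1 \<longlongrightarrow> R1 p) (at p)" unfolding R1_def[abs_def]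
          by (rule MM_tendsto[OF finT0, where G="\<lambda>w j. Gy j * hh \<beta> (y j - w)" and G'="\<lambda>w i. 1"])
             (auto intro!: tendsto_mult tendsto_const hh_tend1 yne)
        have tR2: "(R2 \<longlongrightarrow> R2 p) (at p)" unfolding R2_def[abs_def]
          by (rule MM_tendsto[OF finT0, where G="\<lambda>w j. Gy j" and G'="\<lambda>w j. hh \<beta> (w - y j)"])
             (auto intro!: tendsto_const hh_tend2 ynp)
        have tG: "(Gw0 \<longlongrightarrow> Gw0 p) (at p)" unfolding Gw0_def[abs_def]
          by (rule tendsto_prod) (auto intro!: rr_tend2 gnz)
        have tE: "(E \<longlongrightarrow> E p) (at p)" unfolding E_def[abs_def]
          using tL1 tL2 tR1 tR2 tG
          by (intro tendsto_diff tendsto_mult tendsto_add tendsto_const tendsto_ident_at)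
        have pa: "p - x m + a = 2 * a" using m(2) by simp
        have id1: "rr a (x i) p = q i" for i
          unfolding rr_def q_def hh_def m(2) by (rule frac_eq_neg) (simp_all add: algebra_simps)
        have id2: "rr (-a) p (x i) = q i" for i
          unfolding rr_def q_def hh_def m(2) by (rule frac_eq) (simp_all add: algebra_simps)
        define Gy0 where "Gy0 j = (\<Prod>i\<in>S0. rr (-a) (y j) (x i))" for j
        define q2 where "q2 j = rr a (x m) (y j)" for j
        have id3: "Gy j = Gy0 j * q2 j" for j
        proof -
          have "rr (-a) (y j) (x m) = q2 j"
            unfolding rr_def q2_def by (rule frac_eq_neg) (simp_all add: algebra_simps)
          then show ?thesis unfolding Gy_def Gy0_def Sins(1) using finS0 Sins(2) by (simp add: mult.commute)
        qed
        have id4: "hh \<beta> (p - y j) = q2 j" for j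
          unfolding hh_def q2_def rr_def \<beta>_def m(2) by (rule frac_eq) (simp_all add: algebra_simps)
        have L2p: "L2 p = (\<Prod>i\<in>S0. q i) * MM t (2*a) x gx0 (\<lambda>_. 1) S0"
        proof -
          have "L2 p = MM t (2*a) x (\<lambda>i. gx0 i * q i) (\<lambda>i. 1 * q i) S0"
            unfolding L2_def by (rule MM_cong) (simp_all add: id1 q_def)
          then show ?thesis using MM_scale[OF finS0, of t "2*a" x gx0 q "\<lambda>_. 1"] by simp
        qed
        have Gw0p: "Gw0 p = (\<Prod>i\<in>S0. q i)" unfolding Gw0_def id2 ..
        have R2p: "R2 p = (\<Prod>j\<in>T0. q2 j) * MM t \<beta> y Gy0 (\<lambda>_. 1) T0"
        proof -
          have "R2 p = MM t \<beta> y (\<lambda>j. Gy0 j * q2 j) (\<lambda>j. 1 * q2 j) T0"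
            unfolding R2_def by (rule MM_cong) (simp_all add: id3 id4)
          then show ?thesis using MM_scale[OF finT0, of t \<beta> y Gy0 q2 "\<lambda>_. 1"] by simp
        qed
        have pq2: "(\<Prod>j\<in>T0. q2 j) = gx0 m" unfolding gx0_def q2_def ..
        have ih: "MTP t a x S0 y T0" using IH[of S0 T0] T0_def S0_def by simp
        have LHx0: "LH t a x S0 y T0 = MM t (2*a) x gx0 (\<lambda>_. 1) S0" unfolding LH_def gx0_def[abs_def] ..
        have LHy0: "LH t (-a) y T0 x S0 = MM t \<beta> y Gy0 (\<lambda>_. 1) T0"
          unfolding LH_def Gy0_def[abs_def] \<beta>_def by simp
        have "E p = 2*a*t*gx0 m*(\<Prod>i\<in>S0. q i)*(1+t) * ((1+t)^card T0 * LH t a x S0 y T0 - (1+t)^card S0 * LH t (-a) y T0 x S0)"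
          unfolding E_def pa L2p Gw0p R2p cardT cardS pq2 LHx0 LHy0 by (simp add: algebra_simps)
        then have Ep: "E p = 0" using ih unfolding MTP_def by simp
        have ev': "eventually (\<lambda>w. E w = (w - p) * f w) (at p)" using ev by (rule eventually_mono) simp
        show ?thesis using Lim_transform_eventually[OF tE ev'] Ep by simp
      next
        case 2
        note n = 2
        define T1 where "T1 = T0 - {n}"
        have T0ins: "T0 = insert n T1" "n \<notin> T1" using n T1_def by auto
        have finT1: "finite T1" using finT0 T1_def by simp
        define R1a where "R1a w = MM t \<beta> y (\<lambda>j. Gy j * hh \<beta> (y j - w) * hh \<beta> (y j - y n)) (\<lambda>_. 1) T1" for w
        define R1b where "R1b w = MM t \<beta> y (\<lambda>j. Gy j * hh \<beta> (y j - w)) (\<lambda>j. hh \<beta> (y n - y j)) T1" for w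
        define R2a where "R2a w = MM t \<beta> y (\<lambda>j. Gy j * hh \<beta> (y j - y n)) (\<lambda>j. hh \<beta> (w - y j)) T1" for w
        define R2b where "R2b w = MM t \<beta> y Gy (\<lambda>j. hh \<beta> (w - y j) * hh \<beta> (y n - y j)) T1" for w
        have R1split: "R1 w = R1a w + t * (Gy n * hh \<beta> (y n - w)) * R1b w" for w
          unfolding R1_def R1a_def R1b_def T0ins(1) MM_insert[OF finT1 T0ins(2)] by simp
        have R2split: "R2 w = hh \<beta> (w - y n) * R2a w + t * Gy n * R2b w" for w
          unfolding R2_def R2a_def R2b_def T0ins(1) MM_insert[OF finT1 T0ins(2)] by simp
        define E where "E w = (1+t)^card T * ((w-p) * L w) - (1+t)^card S * ((w-p)*R1a w
             + t*Gy n*(-(y n - w + \<beta>))*R1b w + t*Gw w*((w - y n + \<beta>)*R2a w + (w-p)*t*Gy n*R2b w))" for w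
        have ev: "eventually (\<lambda>w. E w = (w - p) * f w) (at p)"
        proof -
          have "eventually (\<lambda>w. w \<noteq> p) (at p)" by (simp add: eventually_at_filter)
          then show ?thesis
          proof eventually_elim
            case (elim w)
            have d1: "y n - w \<noteq> 0" using elim n(2) by simp
            have d2: "w - y n \<noteq> 0" using elim n(2) by simp
            have k1: "(w - p) * hh \<beta> (y n - w) = - (y n - w + \<beta>)"
            proof -
              have e: "w - p = - (y n - w)" using n(2) by simp
              show ?thesis unfolding hh_def e by (rule res_key[OF d1])
            qed
            have k2: "(w - p) * hh \<beta> (w - y n) = w - y n + \<beta>"
            proof -
              have e: "w - p = w - y n" using n(2) by simp
              show ?thesis unfolding hh_def e by (rule res_key2[OF d2])
            qed
            have "(w - p) * f w = (1+t)^card T * ((w-p) * L w) - (1+t)^card S * ((w-p)*R1a w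
             + t*Gy n*((w - p) * hh \<beta> (y n - w))*R1b w + t*Gw w*(((w - p) * hh \<beta> (w - y n))*R2a w + (w-p)*t*Gy n*R2b w))"
              unfolding f_def R1split R2split by (simp add: algebra_simps)
            also have "\<dots> = E w" unfolding k1 k2 E_def by simp
            finally show ?case by simp
          qed
        qed
        have ynj: "y j - p \<noteq> 0" if "j \<in> T1" for j
          using injy that T0ins T0_def n unfolding inj_on_def by auto
        have ynj': "p - y j \<noteq> 0" if "j \<in> T1" for j
          using ynj[OF that] by (metis right_minus_eq)
        have xn: "x i - p + a \<noteq> 0" if "i \<in> S" for i
          using gxy[of i n] that n T0_def by simp
        have xn': "p - x i + - a \<noteq> 0" if "i \<in> S" for i
        proof -
          have e: "p - x i + - a = - (x i - p + a)" by simp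
          show ?thesis using e xn[OF that] by (metis neg_equal_0_iff_equal)
        qed
        have tL: "(L \<longlongrightarrow> L p) (at p)" unfolding L_def[abs_def]
          by (rule MM_tendsto[OF finS, where G="\<lambda>w i. gx0 i * rr a (x i) w" and G'="\<lambda>w i. 1"])
             (auto intro!: tendsto_mult tendsto_const rr_tend xn)
        have tR1a: "(R1a \<longlongrightarrow> R1a p) (at p)" unfolding R1a_def[abs_def]
          by (rule MM_tendsto[OF finT1, where G="\<lambda>w j. Gy j * hh \<beta> (y j - w) * hh \<beta> (y j - y n)" and G'="\<lambda>w i. 1"])
             (auto intro!: tendsto_mult tendsto_const hh_tend1 ynj)
        have tR1b: "(R1b \<longlongrightarrow> R1b p) (at p)" unfolding R1b_def[abs_def]
          by (rule MM_tendsto[OF finT1, where G="\<lambda>w j. Gy j * hh \<beta> (y j - w)" and G'="\<lambda>w j. hh \<beta> (y n - y j)"])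
             (auto intro!: tendsto_mult tendsto_const hh_tend1 ynj)
        have tR2a: "(R2a \<longlongrightarrow> R2a p) (at p)" unfolding R2a_def[abs_def]
          by (rule MM_tendsto[OF finT1, where G="\<lambda>w j. Gy j * hh \<beta> (y j - y n)" and G'="\<lambda>w j. hh \<beta> (w - y j)"])
             (auto intro!: tendsto_const hh_tend2 ynj')
        have tR2b: "(R2b \<longlongrightarrow> R2b p) (at p)" unfolding R2b_def[abs_def]
          by (rule MM_tendsto[OF finT1, where G="\<lambda>w j. Gy j" and G'="\<lambda>w j. hh \<beta> (w - y j) * hh \<beta> (y n - y j)"])
             (auto intro!: tendsto_mult tendsto_const hh_tend2 ynj')
        have tG: "(Gw \<longlongrightarrow> Gw p) (at p)" unfolding Gw_def[abs_def]
          by (rule tendsto_prod) (auto intro!: rr_tend2 xn')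
        have tE: "(E \<longlongrightarrow> E p) (at p)" unfolding E_def[abs_def]
          using tL tR1a tR1b tR2a tR2b tG
          by (intro tendsto_diff tendsto_mult tendsto_add tendsto_const tendsto_ident_at tendsto_minus)
        have e1: "R1b p = R2a p" unfolding R1b_def R2a_def n(2) by simp
        have e2: "Gw p = Gy n" unfolding Gw_def Gy_def n(2) ..
        have Ep: "E p = 0" unfolding E_def e1 e2 using n(2) by (simp add: algebra_simps)
        show ?thesis using Lim_transform_eventually[OF tE ev] Ep by simp
      qed
    qed
  qed
  then show ?thesis unfolding MTP_def LHx LHy f_def by simp
qed

theorem MT: "generic a x S y T \<Longrightarrow> MTP t a x S y T"
proof (induction "card S + card T" arbitrary: a x S y T rule: less_induct)
  case less
  have finS: "finite S" and finT: "finite T" using less.prems unfolding generic_def by auto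
  show ?case
  proof (cases "T = {}")
    case False
    then obtain v where v: "v \<in> T" by blast
    show ?thesis
    proof (rule step[OF less.prems v])
      fix S' T' assume st: "S' \<subseteq> S" "T' \<subseteq> T - {v}"
      have c1: "card S' \<le> card S" using st(1) finS by (rule card_mono[rotated])
      have "card T' \<le> card (T - {v})" using st(2) finT by (intro card_mono) auto
      moreover have "card (T - {v}) < card T" by (rule card_Diff1_less[OF finT v])
      ultimately have c2: "card T' < card T" by linarith
      have g: "generic a x S' y T'" by (rule generic_mono[OF less.prems]) (use st in auto)
      show "MTP t a x S' y T'" by (rule less.hyps[OF _ g]) (use c1 c2 in linarith)
    qed
  next
    case True
    show ?thesis
    proof (cases "S = {}")
      case True
      then show ?thesis using \<open>T = {}\<close> unfolding MTP_def LH_def by simp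
    next
      case False
      then obtain v where v: "v \<in> S" by blast
      have "MTP t (-a) y T x S"
      proof (rule step[OF generic_swap[OF less.prems] v])
        fix S' T' assume st: "S' \<subseteq> T" "T' \<subseteq> S - {v}"
        have c1: "card S' \<le> card T" using st(1) finT by (rule card_mono[rotated])
        have "card T' \<le> card (S - {v})" using st(2) finS by (intro card_mono) auto
        moreover have "card (S - {v}) < card S" by (rule card_Diff1_less[OF finS v])
        ultimately have c2: "card T' < card S" by linarith
        have g: "generic a x T' y S'" by (rule generic_mono[OF less.prems]) (use st in auto)
        have "MTP t a x T' y S'" by (rule less.hyps[OF _ g]) (use c1 c2 in linarith)
        then show "MTP t (-a) y S' x T'" using MTP_swap[of t "-a" x T' y S'] by simp
      qed
      then show ?thesis by (rule MTP_swap)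
    qed
  qed
qed

lemma poly_of_sum: fixes c :: "nat \<Rightarrow> complex" shows "poly (\<Sum>k\<le>n. monom (c k) k) t = (\<Sum>k\<le>n. c k * t ^ k)"
  by (simp add: poly_sum poly_monom)

lemma coeff_of_sum: "(\<forall>k>n. c k = 0) \<Longrightarrow> coeff (\<Sum>k\<le>n. monom (c k) k) i = c i"
  by (auto simp: coeff_sum coeff_monom)

lemma coeff_extract:
  fixes cL cR :: "nat \<Rightarrow> complex"
  assumes eq: "\<And>t. (1+t)^M * (\<Sum>k\<le>n1. cL k * t^k) = (1+t)^(M + l) * (\<Sum>k\<le>n2. cR k * t^k)"
    and zL: "\<forall>k>n1. cL k = 0" and zR: "\<forall>k>n2. cR k = 0"
  shows "cL k = (\<Sum>j\<le>k. of_nat (l choose j) * cR (k - j))"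
proof -
  define pL where "pL = (\<Sum>k\<le>n1. monom (cL k) k)"
  define pR where "pR = (\<Sum>k\<le>n2. monom (cR k) k)"
  define e :: "complex poly" where "e = [:1, 1:]"
  have pe: "poly e t = 1 + t" for t unfolding e_def by simp
  have "poly (e^M * pL) t = poly (e^M * (e^l * pR)) t" for t
    unfolding pL_def pR_def poly_mult poly_power pe poly_of_sum using eq[of t] by (simp add: power_add algebra_simps)
  then have "e^M * pL = e^M * (e^l * pR)" by (simp add: poly_eq_poly_eq_iff[symmetric] fun_eq_iff)
  moreover have ne: "e \<noteq> 0" unfolding e_def by simp
  ultimately have pp: "pL = e^l * pR" by simp
  have "cL k = coeff pL k" unfolding pL_def using zL by (simp add: coeff_of_sum)
  also have "\<dots> = (\<Sum>j\<le>k. coeff (e^l) j * coeff pR (k - j))" unfolding pp coeff_mult ..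
  also have "\<dots> = (\<Sum>j\<le>k. of_nat (l choose j) * cR (k - j))"
  proof (rule sum.cong[OF refl])
    fix j assume "j \<in> {..k}"
    have c1: "coeff (e^l) j = of_nat (l choose j)"
    proof (cases "j \<le> l")
      case True then show ?thesis unfolding e_def by (simp add: coeff_linear_poly_power)
    next
      case False
      have "degree (e^l) = l" unfolding e_def by (simp add: degree_power_eq)
      then show ?thesis using False by (simp add: coeff_eq_0)
    qed
    show "coeff (e ^ l) j * coeff pR (k - j) = of_nat (l choose j) * cR (k - j)"
      unfolding c1 pR_def using zR by (simp add: coeff_of_sum)
  qed
  finally show ?thesis .
qed

definition coefM :: "complex \<Rightarrow> (nat\<Rightarrow>complex) \<Rightarrow> (nat\<Rightarrow>complex) \<Rightarrow> (nat\<Rightarrow>complex) \<Rightarrow> nat set \<Rightarrow> nat \<Rightarrow> complex" where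
  "coefM \<beta> u g g' T k = (\<Sum>J\<in>{J. J \<subseteq> T \<and> card J = k}. cf \<beta> u T J * (\<Prod>j\<in>J. g j) * (\<Prod>j\<in>T - J. g' j))"

lemma MM_coef:
  assumes "finite T"
  shows "MM t \<beta> u g g' T = (\<Sum>k\<le>card T. coefM \<beta> u g g' T k * t ^ k)"
proof -
  have "MM t \<beta> u g g' T = (\<Sum>k\<le>card T. \<Sum>J\<in>{J\<in>Pow T. card J = k}. t ^ card J * cf \<beta> u T J * (\<Prod>j\<in>J. g j) * (\<Prod>j\<in>T - J. g' j))"
    unfolding MM_def
    by (rule sum.group[symmetric]) (use assms in \<open>auto intro: card_mono\<close>)
  also have "\<dots> = (\<Sum>k\<le>card T. coefM \<beta> u g g' T k * t ^ k)"
    unfolding coefM_def sum_distrib_right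
    by (intro sum.cong) (auto simp: algebra_simps)
  finally show ?thesis .
qed

lemma coefM_zero: "finite T \<Longrightarrow> k > card T \<Longrightarrow> coefM \<beta> u g g' T k = 0"
  unfolding coefM_def using card_mono by (metis (mono_tags, lifting) mem_Collect_eq not_le sum.neutral)

lemma shift_arg1:
  fixes P Q s :: complex and h m :: real
  assumes "h \<noteq> 0" "m \<noteq> 0"
  shows "\<i> * (P - s * \<i> * of_real h * of_real m - Q) / (of_real h * of_real m) = \<i> * (P - Q) / (of_real h * of_real m) + s"
  using assms by (simp add: field_simps)

lemma shift_arg2:
  fixes P Q s :: complex and h m :: real
  assumes "h \<noteq> 0" "m \<noteq> 0"
  shows "\<i> * (P - (Q - s * \<i> * of_real h * of_real m)) / (of_real h * of_real m) = \<i> * (P - Q) / (of_real h * of_real m) - s"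
  using assms by (simp add: field_simps)

lemma coef_arg:
  fixes P s :: complex and h m g :: real
  assumes "h \<noteq> 0" "m \<noteq> 0"
  shows "(P - s * \<i> * of_real m * of_real g) / P
     = (\<i> * P / (of_real h * of_real m) + 2 * (s * (of_real g / (2 * of_real h)))) / (\<i> * P / (of_real h * of_real m))"
proof -
  have c: "\<i> / (of_real h * of_real m) \<noteq> (0::complex)" using assms by simp
  have "(P - s * \<i> * of_real m * of_real g) / P = (\<i> / (of_real h * of_real m) * (P - s * \<i> * of_real m * of_real g)) / (\<i> / (of_real h * of_real m) * P)"
    using c by (rule mult_divide_mult_cancel_left[symmetric])
  also have "\<i> / (of_real h * of_real m) * (P - s * \<i> * of_real m * of_real g) = \<i> * P / (of_real h * of_real m) + 2 * (s * (of_real g / (2 * of_real h)))"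
    using assms by (simp add: field_simps)
  also have "\<i> / (of_real h * of_real m) * P = \<i> * P / (of_real h * of_real m)" by simp
  finally show ?thesis .
qed

lemma notInt_nonpos: "(w::complex) \<notin> \<int> \<Longrightarrow> w \<notin> \<int>\<^sub>\<le>\<^sub>0"
  using nonpos_Ints_Int by blast
lemma notInt_nz: "(w::complex) \<notin> \<int> \<Longrightarrow> w \<noteq> 0"
  by auto
lemma notInt_minus1: "(w::complex) \<notin> \<int> \<Longrightarrow> w - 1 \<notin> \<int>"
proof
  assume "w \<notin> \<int>" "w - 1 \<in> \<int>"
  then have "(w - 1) + 1 \<in> \<int>" by (intro Ints_add) auto
  then show False using \<open>w \<notin> \<int>\<close> by simp
qed

lemma canc: "w1 \<noteq> 0 \<Longrightarrow> w2 \<noteq> 0 \<Longrightarrow> (w1*A)/(w2*B) * (w2/w1) = (A::complex)/B"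
  by (simp add: field_simps)

lemma gam_shift:
  fixes z \<alpha> :: complex and tau :: bool
  assumes A: "z + \<alpha> \<notin> \<int>" and B: "z - \<alpha> \<notin> \<int>"
  shows "Gamma (z + sgnc tau - \<alpha>) / Gamma (z + sgnc tau + \<alpha>) = Gamma (z - \<alpha>) / Gamma (z + \<alpha>) * rr (sgnc tau * \<alpha>) (z + (sgnc tau - 1)/2) 0"
proof (cases tau)
  case True
  have g1: "Gamma (z + 1 - \<alpha>) = (z - \<alpha>) * Gamma (z - \<alpha>)"
    using Gamma_plus1[OF notInt_nonpos[OF B]] by (simp add: algebra_simps)
  have g2: "Gamma (z + 1 + \<alpha>) = (z + \<alpha>) * Gamma (z + \<alpha>)"
    using Gamma_plus1[OF notInt_nonpos[OF A]] by (simp add: algebra_simps)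
  have r: "rr \<alpha> z 0 = (z - \<alpha>) / (z + \<alpha>)" unfolding rr_def by simp
  show ?thesis using True by (simp add: sgnc_def r g1 g2 mult.commute)
next
  case False
  have A1: "z - 1 + \<alpha> \<notin> \<int>" using notInt_minus1[OF A] by (simp add: algebra_simps)
  have B1: "z - 1 - \<alpha> \<notin> \<int>" using notInt_minus1[OF B] by (simp add: algebra_simps)
  have g1: "Gamma (z - \<alpha>) = (z - 1 - \<alpha>) * Gamma (z - 1 - \<alpha>)"
    using Gamma_plus1[OF notInt_nonpos[OF B1]] by (simp add: algebra_simps)
  have g2: "Gamma (z + \<alpha>) = (z - 1 + \<alpha>) * Gamma (z - 1 + \<alpha>)"
    using Gamma_plus1[OF notInt_nonpos[OF A1]] by (simp add: algebra_simps)
  have n1: "z - 1 - \<alpha> \<noteq> 0" using notInt_nz[OF B1] .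
  have n2: "z - 1 + \<alpha> \<noteq> 0" using notInt_nz[OF A1] .
  have r: "rr (- \<alpha>) (z - 1) 0 = (z - 1 + \<alpha>) / (z - 1 - \<alpha>)" unfolding rr_def by simp
  have e1: "z + - 1 - \<alpha> = z - 1 - \<alpha>" "z + - 1 + \<alpha> = z - 1 + \<alpha>" by simp_all
  have "Gamma (z - 1 - \<alpha>) / Gamma (z - 1 + \<alpha>) = (z - 1 - \<alpha>) * Gamma (z - 1 - \<alpha>) / ((z - 1 + \<alpha>) * Gamma (z - 1 + \<alpha>)) * ((z - 1 + \<alpha>) / (z - 1 - \<alpha>))"
    using canc[OF n1 n2] by simp
  then show ?thesis using False by (simp add: sgnc_def g1 g2 r e1)
qed

theorem theorem4p6:
  fixes hbar mu g :: real and N l k :: nat and tau :: bool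
    and p q :: "nat \<Rightarrow> complex"
  assumes "hbar > 0" and "mu > 0" and "g > 0"
    and "l \<le> N" and "1 \<le> k" and "k \<le> N"
    and "\<And>m m'. m \<in> {1..N} \<Longrightarrow> m' \<in> {1..N} \<Longrightarrow> m \<noteq> m' \<Longrightarrow> p m \<noteq> p m'"
    and "\<And>n n'. n \<in> {1..N-l} \<Longrightarrow> n' \<in> {1..N-l} \<Longrightarrow> n \<noteq> n' \<Longrightarrow> q n \<noteq> q n'"
    and "\<And>m n. m \<in> {1..N} \<Longrightarrow> n \<in> {1..N-l} \<Longrightarrow>
          \<i> * (p m - q n) / (of_real hbar * of_real mu) + of_real g / (2 * of_real hbar) \<notin> \<int>"
    and "\<And>m n. m \<in> {1..N} \<Longrightarrow> n \<in> {1..N-l} \<Longrightarrow>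
          \<i> * (p m - q n) / (of_real hbar * of_real mu) - of_real g / (2 * of_real hbar) \<notin> \<int>"
  shows "A_nr hbar mu g tau N k (\<lambda>p'. K_kernel hbar mu g N l p' q) p =
         (\<Sum>j=0..min k l. of_nat (l choose j) *
            A_nr hbar mu g (\<not> tau) (N - l) (k - j) (\<lambda>q'. K_kernel hbar mu g N l p q') q)"
proof -
  define H where "H = (of_real hbar * of_real mu :: complex)"
  define \<alpha> where "\<alpha> = (of_real g / (2 * of_real hbar) :: complex)"
  define \<sigma> where "\<sigma> = sgnc tau"
  define u where "u m = \<i> * p m / H" for m
  define v where "v n = \<i> * q n / H" for n
  define a where "a = \<sigma> * \<alpha>"
  define x where "x m = u m + (\<sigma> - 1) / 2" for m
  define S where "S = {1..N}"
  define T where "T = {1..N-l}"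
  define gr where "gr z = Gamma (z - \<alpha>) / Gamma (z + \<alpha>)" for z
  define Kpq where "Kpq = K_kernel hbar mu g N l p q"
  have hb0: "hbar \<noteq> 0" and mu0: "mu \<noteq> 0" using assms(1,2) by auto
  have Hnz: "H \<noteq> 0" using hb0 mu0 by (simp add: H_def)
  have finS: "finite S" and finT: "finite T" by (simp_all add: S_def T_def)
  have cardS: "card S = card T + l" using assms(4) by (simp add: S_def T_def)
  have zuv: "\<i> * (P - Q) / (of_real hbar * of_real mu) = \<i> * P / H - \<i> * Q / H" for P Q
    unfolding H_def by (simp add: diff_divide_distrib right_diff_distrib)
  have Kform: "K_kernel hbar mu g N l p' q' = (\<Prod>m\<in>S. \<Prod>n\<in>T. gr (\<i> * (p' m - q' n) / H))" for p' q'
    unfolding K_kernel_def gr_def \<alpha>_def H_def S_def T_def by simp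
  have hA: "u m - v n + \<alpha> \<notin> \<int>" if "m \<in> S" "n \<in> T" for m n
    using assms(9)[of m n] that zuv[of "p m" "q n"] unfolding S_def T_def u_def v_def \<alpha>_def by simp
  have hB: "u m - v n - \<alpha> \<notin> \<int>" if "m \<in> S" "n \<in> T" for m n
    using assms(10)[of m n] that zuv[of "p m" "q n"] unfolding S_def T_def u_def v_def \<alpha>_def by simp
  have gam: "gr (u m - v n + \<sigma>) = gr (u m - v n) * rr a (x m) (v n)" if "m \<in> S" "n \<in> T" for m n
  proof -
    have "rr a (x m) (v n) = rr (sgnc tau * \<alpha>) (u m - v n + (sgnc tau - 1)/2) 0"
      unfolding rr_def a_def x_def \<sigma>_def by (simp add: algebra_simps)
    then show ?thesis using gam_shift[OF hA[OF that] hB[OF that], of tau] unfolding gr_def \<sigma>_def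
      by (simp add: algebra_simps)
  qed
  have K0: "Kpq = (\<Prod>m\<in>S. \<Prod>n\<in>T. gr (u m - v n))"
    unfolding Kpq_def Kform u_def v_def H_def by (simp add: diff_divide_distrib right_diff_distrib)
  have K1: "K_kernel hbar mu g N l (shift_vec hbar mu tau I p) q = Kpq * (\<Prod>m\<in>I. \<Prod>n\<in>T. rr a (x m) (v n))"
    if I: "I \<subseteq> S" for I
  proof -
    have ar: "\<i> * (shift_vec hbar mu tau I p m - q n) / H = u m - v n + (if m \<in> I then \<sigma> else 0)" for m n
      using shift_arg1[OF hb0 mu0, of "p m" \<sigma> "q n"] zuv[of "p m" "q n"]
      unfolding shift_vec_def H_def u_def v_def \<sigma>_def by auto
    have "K_kernel hbar mu g N l (shift_vec hbar mu tau I p) q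
        = (\<Prod>m\<in>S. \<Prod>n\<in>T. gr (u m - v n) * (if m \<in> I then rr a (x m) (v n) else 1))"
      unfolding Kform ar by (intro prod.cong refl) (auto simp: gam)
    also have "\<dots> = Kpq * (\<Prod>m\<in>S. \<Prod>n\<in>T. (if m \<in> I then rr a (x m) (v n) else 1))"
      unfolding K0 by (simp add: prod.distrib)
    also have "(\<Prod>m\<in>S. \<Prod>n\<in>T. (if m \<in> I then rr a (x m) (v n) else 1))
        = (\<Prod>m\<in>S. if m \<in> I then (\<Prod>n\<in>T. rr a (x m) (v n)) else 1)"
      by (intro prod.cong) auto
    also have "\<dots> = (\<Prod>m\<in>S \<inter> I. \<Prod>n\<in>T. rr a (x m) (v n))"
      using prod.inter_restrict[OF finS, symmetric] by simp
    also have "S \<inter> I = I" using I by auto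
    finally show ?thesis .
  qed
  have sg: "sgnc (\<not> tau) = - \<sigma>" unfolding sgnc_def \<sigma>_def by simp
  have K2: "K_kernel hbar mu g N l p (shift_vec hbar mu (\<not> tau) J q) = Kpq * (\<Prod>n\<in>J. \<Prod>m\<in>S. rr (-a) (v n) (x m))"
    if J: "J \<subseteq> T" for J
  proof -
    have ar: "\<i> * (p m - shift_vec hbar mu (\<not> tau) J q n) / H = u m - v n + (if n \<in> J then \<sigma> else 0)" for m n
      using shift_arg2[OF hb0 mu0, of "p m" "q n" "- \<sigma>"] zuv[of "p m" "q n"]
      unfolding shift_vec_def H_def u_def v_def sg by auto
    have rs: "rr a (x m) (v n) = rr (-a) (v n) (x m)" for m n
      unfolding rr_def by (rule frac_eq_neg) simp_all
    have "K_kernel hbar mu g N l p (shift_vec hbar mu (\<not> tau) J q)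
        = (\<Prod>m\<in>S. \<Prod>n\<in>T. gr (u m - v n) * (if n \<in> J then rr a (x m) (v n) else 1))"
      unfolding Kform ar by (intro prod.cong refl) (auto simp: gam)
    also have "\<dots> = Kpq * (\<Prod>m\<in>S. \<Prod>n\<in>T. (if n \<in> J then rr a (x m) (v n) else 1))"
      unfolding K0 by (simp add: prod.distrib)
    also have "(\<Prod>m\<in>S. \<Prod>n\<in>T. (if n \<in> J then rr a (x m) (v n) else 1))
        = (\<Prod>n\<in>T. \<Prod>m\<in>S. (if n \<in> J then rr a (x m) (v n) else 1))"
      by (rule prod.swap)
    also have "\<dots> = (\<Prod>n\<in>T. if n \<in> J then (\<Prod>m\<in>S. rr (-a) (v n) (x m)) else 1)"
      by (intro prod.cong) (auto simp: rs)
    also have "\<dots> = (\<Prod>n\<in>T \<inter> J. \<Prod>m\<in>S. rr (-a) (v n) (x m))"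
      using prod.inter_restrict[OF finT, symmetric] by simp
    also have "T \<inter> J = J" using J by auto
    finally show ?thesis .
  qed
  have C1: "(p m - p m' - sgnc tau * \<i> * of_real mu * of_real g) / (p m - p m') = hh (2*a) (x m - x m')" for m m'
  proof -
    have X: "x m - x m' = \<i> * (p m - p m') / (of_real hbar * of_real mu)"
      unfolding x_def u_def H_def by (simp add: diff_divide_distrib right_diff_distrib)
    show ?thesis unfolding hh_def X a_def \<alpha>_def \<sigma>_def
      using coef_arg[OF hb0 mu0, of "p m - p m'" "sgnc tau" g] by simp
  qed
  have C2: "(q n - q n' - sgnc (\<not> tau) * \<i> * of_real mu * of_real g) / (q n - q n') = hh (2*(-a)) (v n - v n')" for n n'
  proof -
    have X: "v n - v n' = \<i> * (q n - q n') / (of_real hbar * of_real mu)"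
      unfolding v_def H_def by (simp add: diff_divide_distrib right_diff_distrib)
    show ?thesis unfolding hh_def X a_def \<alpha>_def sg
      using coef_arg[OF hb0 mu0, of "q n - q n'" "- \<sigma>" g] by (simp add: sg)
  qed
  define gL where "gL i = (\<Prod>n\<in>T. rr a (x i) (v n))" for i
  define gR where "gR n = (\<Prod>m\<in>S. rr (-a) (v n) (x m))" for n
  define cL where "cL k = coefM (2*a) x gL (\<lambda>_. 1) S k" for k
  define cR where "cR k = coefM (2*(-a)) v gR (\<lambda>_. 1) T k" for k
  have LHS: "A_nr hbar mu g tau N k (\<lambda>p'. K_kernel hbar mu g N l p' q) p = Kpq * cL k"
    unfolding A_nr_def cL_def coefM_def sum_distrib_left S_def[symmetric]
  proof (rule sum.cong[OF refl])
    fix I assume "I \<in> {I. I \<subseteq> S \<and> card I = k}"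
    then have I: "I \<subseteq> S" by simp
    show "(\<Prod>m\<in>I. \<Prod>m'\<in>S - I. (p m - p m' - sgnc tau * \<i> * of_real mu * of_real g) / (p m - p m')) *
          K_kernel hbar mu g N l (shift_vec hbar mu tau I p) q =
          Kpq * (cf (2 * a) x S I * prod gL I * (\<Prod>j\<in>S - I. 1))"
      unfolding K1[OF I] cf_def C1 gL_def by simp
  qed
  have RHS: "A_nr hbar mu g (\<not> tau) (N - l) k' (\<lambda>q'. K_kernel hbar mu g N l p q') q = Kpq * cR k'" for k'
    unfolding A_nr_def cR_def coefM_def sum_distrib_left T_def[symmetric]
  proof (rule sum.cong[OF refl])
    fix J assume "J \<in> {J. J \<subseteq> T \<and> card J = k'}"
    then have J: "J \<subseteq> T" by simp
    show "(\<Prod>m\<in>J. \<Prod>m'\<in>T - J. (q m - q m' - sgnc (\<not> tau) * \<i> * of_real mu * of_real g) / (q m - q m')) *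
          K_kernel hbar mu g N l p (shift_vec hbar mu (\<not> tau) J q) =
          Kpq * (cf (2 * - a) v T J * prod gR J * (\<Prod>j\<in>T - J. 1))"
      unfolding K2[OF J] cf_def C2 gR_def by simp
  qed
  have Z: "(0::complex) \<in> \<int>" "(1::complex) \<in> \<int>" by simp_all
  have gen: "generic a x S v T"
    unfolding generic_def
  proof (intro conjI ballI finS finT)
    show "inj_on x S"
    proof (rule inj_onI)
      fix m m' assume mm: "m \<in> S" "m' \<in> S" "x m = x m'"
      then have "p m = p m'" using Hnz by (simp add: x_def u_def)
      then show "m = m'" using assms(7)[of m m'] mm unfolding S_def by blast
    qed
    show "inj_on v T"
    proof (rule inj_onI)
      fix n n' assume nn: "n \<in> T" "n' \<in> T" "v n = v n'"
      then have "q n = q n'" using Hnz by (simp add: v_def)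
      then show "n = n'" using assms(8)[of n n'] nn unfolding T_def by blast
    qed
    fix m n assume mn: "m \<in> S" "n \<in> T"
    show "x m - v n + a \<noteq> 0"
    proof (cases tau)
      case True
      have e: "x m - v n + a = u m - v n + \<alpha>" using True by (simp add: x_def a_def \<sigma>_def sgnc_def)
      show ?thesis using hA[OF mn] Z(1) by (metis e)
    next
      case False
      have "x m - v n + a = (u m - v n - \<alpha>) - 1" using False by (simp add: x_def a_def \<sigma>_def sgnc_def)
      moreover have "(u m - v n - \<alpha>) - 1 \<noteq> 0" using hB[OF mn] Z(2) by (metis right_minus_eq)
      ultimately show ?thesis by metis
    qed
    show "x m - v n - a \<noteq> 0"
    proof (cases tau)
      case True
      have e: "x m - v n - a = u m - v n - \<alpha>" using True by (simp add: x_def a_def \<sigma>_def sgnc_def)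
      show ?thesis using hB[OF mn] Z(1) by (metis e)
    next
      case False
      have "x m - v n - a = (u m - v n + \<alpha>) - 1" using False by (simp add: x_def a_def \<sigma>_def sgnc_def)
      moreover have "(u m - v n + \<alpha>) - 1 \<noteq> 0" using hA[OF mn] Z(2) by (metis right_minus_eq)
      ultimately show ?thesis by metis
    qed
  qed
  have eq: "(1+t)^card T * (\<Sum>k\<le>card S. cL k * t^k) = (1+t)^(card T + l) * (\<Sum>k\<le>card T. cR k * t^k)" for t
  proof -
    have "MTP t a x S v T" by (rule MT[OF gen])
    then have "(1+t)^card T * LH t a x S v T = (1+t)^card S * LH t (-a) v T x S" unfolding MTP_def .
    moreover have "LH t a x S v T = (\<Sum>k\<le>card S. cL k * t^k)"
      unfolding LH_def cL_def gL_def[abs_def] by (rule MM_coef[OF finS])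
    moreover have "LH t (-a) v T x S = (\<Sum>k\<le>card T. cR k * t^k)"
      unfolding LH_def cR_def gR_def[abs_def] by (rule MM_coef[OF finT])
    ultimately show ?thesis unfolding cardS by simp
  qed
  have zL: "\<forall>k>card S. cL k = 0" unfolding cL_def using coefM_zero[OF finS] by blast
  have zR: "\<forall>k>card T. cR k = 0" unfolding cR_def using coefM_zero[OF finT] by blast
  have ck: "cL k = (\<Sum>j\<le>k. of_nat (l choose j) * cR (k - j))"
    by (rule coeff_extract[OF eq zL zR])
  have "(\<Sum>j\<le>k. of_nat (l choose j) * (Kpq * cR (k - j))) = (\<Sum>j=0..min k l. of_nat (l choose j) * (Kpq * cR (k - j)))"
    by (rule sum.mono_neutral_right) auto
  then show ?thesis unfolding LHS RHS ck sum_distrib_left by (simp add: algebra_simps)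
qed

end
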